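(* Let $\mathbf u:[0,\infty)\to(0,\infty)^N$ be a differentiable solution of the flux-differencing scheme $$\frac{du_i}{dt}=-2\sum_{j=1}^N D_{ij}\,F^\star(u_i,u_j),\qquad i=1,\dots,N.$$ (i) If $F^\star=F^\star_{\mathrm{geom}}$, then $\mathcal S(\mathbf u)=-2\sum_i H_{ii}\sqrt{u_i/a_i}$ is constant in time. (ii) If $F^\star=F^\star_{\log}$, then $\mathcal S(\mathbf u)=\sum_i H_{ii}\big(u_i\log(a_iu_i)-u_i\big)$ is constant in time.
   Context: $N\ge2$; $H=\operatorname{diag}(H_{ii})$ with $H_{ii}>0$; $Q\in\mathbb R^{N\times N}$ with $Q+Q^T=0$ and $Q\mathbf 1=\mathbf 0$ ($\mathbf 1$ the vector of ones); $D=H^{-1}Q$. Coefficients $a_i>0$ are fixed (time independent). Two-point fluxes: geometric $F^\star_{\mathrm{geom}}(u_i,u_j)=\sqrt{a_iu_i\,a_ju_j}$; logarithmic $F^\star_{\log}(u_i,u_j)=\dfrac{a_ju_j-a_iu_i}{\log(a_ju_j)-\log(a_iu_i)}$, with the value $a_iu_i$ when $a_iu_i=a_ju_j$. *)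

theory Defs
  imports "HOL-Analysis.Analysis"
begin

text \<open>Indices are the elements of a finite type 'n (so N = CARD('n)).
  Vectors in R^N are functions 'n => real; the diagonal matrix H is given by
  its diagonal entries H i; Q is an N x N matrix given as a function.\<close>

definition Dmat :: "('n \<Rightarrow> real) \<Rightarrow> ('n \<Rightarrow> 'n \<Rightarrow> real) \<Rightarrow> 'n \<Rightarrow> 'n \<Rightarrow> real" where
  "Dmat H Q i j = Q i j / H i"

definition Fgeom :: "('n \<Rightarrow> real) \<Rightarrow> 'n \<Rightarrow> 'n \<Rightarrow> real \<Rightarrow> real \<Rightarrow> real" where
  "Fgeom a i j ui uj = sqrt (a i * ui * (a j * uj))"

definition Flog :: "('n \<Rightarrow> real) \<Rightarrow> 'n \<Rightarrow> 'n \<Rightarrow> real \<Rightarrow> real \<Rightarrow> real" where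
  "Flog a i j ui uj =
     (if a i * ui = a j * uj then a i * ui
      else (a j * uj - a i * ui) / (ln (a j * uj) - ln (a i * ui)))"

definition is_solution ::
  "('n::finite \<Rightarrow> 'n \<Rightarrow> real \<Rightarrow> real \<Rightarrow> real) \<Rightarrow> ('n \<Rightarrow> real) \<Rightarrow> ('n \<Rightarrow> 'n \<Rightarrow> real)
     \<Rightarrow> (real \<Rightarrow> 'n \<Rightarrow> real) \<Rightarrow> bool" where
  "is_solution F H Q u \<longleftrightarrow>
     (\<forall>t\<ge>0. \<forall>i. u t i > 0) \<and>
     (\<forall>t\<ge>0. \<forall>i. ((\<lambda>s. u s i) has_real_derivative
                   (-2 * (\<Sum>j\<in>UNIV. Dmat H Q i j * F i j (u t i) (u t j))))
                 (at t within {0..}))"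

definition S_geom :: "('n::finite \<Rightarrow> real) \<Rightarrow> ('n \<Rightarrow> real) \<Rightarrow> ('n \<Rightarrow> real) \<Rightarrow> real" where
  "S_geom H a v = -2 * (\<Sum>i\<in>UNIV. H i * sqrt (v i / a i))"

definition S_log :: "('n::finite \<Rightarrow> real) \<Rightarrow> ('n \<Rightarrow> real) \<Rightarrow> ('n \<Rightarrow> real) \<Rightarrow> real" where
  "S_log H a v = (\<Sum>i\<in>UNIV. H i * (v i * ln (a i * v i) - v i))"

end

theory Submission
  imports Defs
begin

lemma const0:
  fixes f :: "real \<Rightarrow> real"
  assumes "\<And>t. t \<ge> 0 \<Longrightarrow> (f has_real_derivative 0) (at t within {0..})" "t \<ge> 0"
  shows "f t = f 0"
proof -
  have "\<exists>c. \<forall>x\<in>{0::real..}. f x = c"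
    by (rule has_field_derivative_zero_constant) (use assms in auto)
  then obtain c where "\<forall>x\<in>{0::real..}. f x = c" by blast
  then show ?thesis using assms(2) by auto
qed

lemma skew_sum:
  fixes Q :: "'n::finite \<Rightarrow> 'n \<Rightarrow> real"
  assumes Qskew: "\<forall>i j. Q i j + Q j i = 0"
    and Qrow: "\<forall>i. (\<Sum>j\<in>UNIV. Q i j) = 0"
  shows "(\<Sum>i\<in>UNIV. \<Sum>j\<in>UNIV. Q i j * g j) = 0"
proof -
  have "(\<Sum>i\<in>UNIV. \<Sum>j\<in>UNIV. Q i j * g j) = (\<Sum>j\<in>UNIV. \<Sum>i\<in>UNIV. Q i j * g j)"
    by (rule sum.swap)
  also have "\<dots> = (\<Sum>j\<in>UNIV. g j * (\<Sum>i\<in>UNIV. Q i j))"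
    by (simp add: sum_distrib_left mult.commute)
  also have "\<dots> = (\<Sum>j\<in>UNIV. g j * (- (\<Sum>i\<in>UNIV. Q j i)))"
  proof -
    have "\<And>j. (\<Sum>i\<in>UNIV. Q i j) = (\<Sum>i\<in>UNIV. - Q j i)"
      using Qskew by (intro sum.cong) (auto simp: eq_neg_iff_add_eq_0 add.commute)
    then show ?thesis by (simp add: sum_negf)
  qed
  also have "\<dots> = 0" using Qrow by simp
  finally show ?thesis .
qed

lemma geom_part:
  fixes H :: "'n::finite \<Rightarrow> real" and Q :: "'n \<Rightarrow> 'n \<Rightarrow> real" and a :: "'n \<Rightarrow> real"
  assumes Hpos: "\<forall>i. H i > 0"
    and Qskew: "\<forall>i j. Q i j + Q j i = 0"
    and Qrow: "\<forall>i. (\<Sum>j\<in>UNIV. Q i j) = 0"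
    and apos: "\<forall>i. a i > 0"
    and sol: "is_solution (Fgeom a) H Q u" and t: "t \<ge> 0"
  shows "S_geom H a (u t) = S_geom H a (u 0)"
proof (rule const0[OF _ t])
  fix t :: real assume t: "t \<ge> 0"
  define d where "d i = -2 * (\<Sum>j\<in>UNIV. Dmat H Q i j * Fgeom a i j (u t i) (u t j))" for i
  have pos: "\<And>i. u t i > 0" using sol t unfolding is_solution_def by auto
  have du: "\<And>i. ((\<lambda>s. u s i) has_real_derivative d i) (at t within {0..})"
    using sol t unfolding is_solution_def d_def by auto
  have di: "((\<lambda>s. H i * sqrt (u s i / a i)) has_real_derivative
           H i * (inverse (sqrt (u t i / a i)) / 2 * (d i / a i))) (at t within {0..})" for i
  proof -
    have "((\<lambda>s. u s i / a i) has_real_derivative d i / a i) (at t within {0..})"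
      using du[of i] by (rule DERIV_cdivide)
    moreover have "(sqrt has_real_derivative inverse (sqrt (u t i / a i)) / 2) (at (u t i / a i))"
      using pos[of i] apos by (intro DERIV_real_sqrt) auto
    ultimately show ?thesis
      by (intro DERIV_cmult) (rule DERIV_chain2)
  qed
  have key: "H i * (inverse (sqrt (u t i / a i)) / 2 * (d i / a i))
      = - (\<Sum>j\<in>UNIV. Q i j * sqrt (a j * u t j))" for i
  proof -
    have ai: "a i > 0" "H i > 0" "u t i > 0" using apos Hpos pos by auto
    have s: "a i * sqrt (u t i / a i) = sqrt (a i * u t i)"
      using ai by (simp add: real_sqrt_divide real_sqrt_mult field_simps)
    have sp: "sqrt (a i * u t i) > 0" using ai by simp
    have "d i = -2 * (\<Sum>j\<in>UNIV. Q i j / H i * (sqrt (a i * u t i) * sqrt (a j * u t j)))"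
      unfolding d_def Dmat_def Fgeom_def by (simp add: real_sqrt_mult)
    also have "\<dots> = -2 * sqrt (a i * u t i) / H i * (\<Sum>j\<in>UNIV. Q i j * sqrt (a j * u t j))"
      by (simp add: sum_distrib_left sum_divide_distrib algebra_simps sum_negf)
    finally have dd: "d i = \<dots>" .
    have "H i * (inverse (sqrt (u t i / a i)) / 2 * (d i / a i))
        = H i * d i / (2 * (a i * sqrt (u t i / a i)))"
      by (simp add: field_simps)
    also have "\<dots> = H i * d i / (2 * sqrt (a i * u t i))" by (simp add: s)
    also have "\<dots> = - (\<Sum>j\<in>UNIV. Q i j * sqrt (a j * u t j))"
      unfolding dd using ai sp by (simp add: field_simps)
    finally show ?thesis .
  qed
  have "((\<lambda>s. S_geom H a (u s)) has_real_derivative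
      -2 * (\<Sum>i\<in>UNIV. H i * (inverse (sqrt (u t i / a i)) / 2 * (d i / a i)))) (at t within {0..})"
    unfolding S_geom_def by (intro DERIV_cmult DERIV_sum di)
  moreover have "-2 * (\<Sum>i\<in>UNIV. H i * (inverse (sqrt (u t i / a i)) / 2 * (d i / a i))) = 0"
    using skew_sum[OF Qskew Qrow, of "\<lambda>j. sqrt (a j * u t j)"]
    by (simp only: key sum_negf)
  ultimately show "((\<lambda>s. S_geom H a (u s)) has_real_derivative 0) (at t within {0..})" by simp
qed


lemma flog_sym: "Flog a i j x y = Flog a j i y x"
proof -
  have e: "(b - c) / (p - q) = (c - b) / (q - p)" for b c p q :: real
    by (metis minus_diff_eq minus_divide_divide)
  show ?thesis unfolding Flog_def using e by auto
qed

lemma flog_prop: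
  assumes "a i * x > 0" "a j * y > 0"
  shows "(ln (a i * x) - ln (a j * y)) * Flog a i j x y = a i * x - a j * y"
proof (cases "a i * x = a j * y")
  case True then show ?thesis unfolding Flog_def by simp
next
  case False
  then have "ln (a j * y) \<noteq> ln (a i * x)" using assms by simp
  then have "ln (a j * y) - ln (a i * x) \<noteq> 0" by simp
  then show ?thesis using False unfolding Flog_def by (simp add: field_simps)
qed

lemma log_sum:
  fixes Q :: "'n::finite \<Rightarrow> 'n \<Rightarrow> real"
  assumes Qskew: "\<forall>i j. Q i j + Q j i = 0"
    and Qrow: "\<forall>i. (\<Sum>j\<in>UNIV. Q i j) = 0"
    and pos: "\<And>i. a i * v i > 0"
  shows "(\<Sum>i\<in>UNIV. \<Sum>j\<in>UNIV. Q i j * (ln (a i * v i) * Flog a i j (v i) (v j))) = 0"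
proof -
  define M where "M i j = Q i j * (ln (a i * v i) * Flog a i j (v i) (v j))" for i j
  have sw: "(\<Sum>i\<in>UNIV. \<Sum>j\<in>UNIV. M i j) = (\<Sum>i\<in>UNIV. \<Sum>j\<in>UNIV. M j i)"
    by (rule sum.swap)
  have pt: "M i j + M j i = Q i j * (a i * v i) - Q i j * (a j * v j)" for i j
  proof -
    have q: "Q j i = - Q i j" using Qskew by (metis add.commute add_eq_0_iff)
    have "M i j + M j i = Q i j * ((ln (a i * v i) - ln (a j * v j)) * Flog a i j (v i) (v j))"
      unfolding M_def q using flog_sym[of a j i "v j" "v i"] by (simp add: algebra_simps)
    also have "\<dots> = Q i j * (a i * v i - a j * v j)" using flog_prop[of a i "v i" j "v j", OF pos[of i] pos[of j]] by simp
    finally show ?thesis by (simp add: algebra_simps)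
  qed
  have "2 * (\<Sum>i\<in>UNIV. \<Sum>j\<in>UNIV. M i j) = (\<Sum>i\<in>UNIV. \<Sum>j\<in>UNIV. M i j + M j i)"
    using sw by (simp add: sum.distrib)
  also have "\<dots> = (\<Sum>i\<in>UNIV. \<Sum>j\<in>UNIV. Q i j * (a i * v i)) - (\<Sum>i\<in>UNIV. \<Sum>j\<in>UNIV. Q i j * (a j * v j))"
    by (simp add: pt sum_subtractf)
  also have "(\<Sum>i\<in>UNIV. \<Sum>j\<in>UNIV. Q i j * (a i * v i)) = 0"
    using Qrow by (simp add: sum_distrib_right[symmetric])
  also have "(\<Sum>i\<in>UNIV. \<Sum>j\<in>UNIV. Q i j * (a j * v j)) = 0"
    by (rule skew_sum[OF Qskew Qrow])
  finally show ?thesis unfolding M_def by simp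
qed

lemma log_part:
  fixes H :: "'n::finite \<Rightarrow> real" and Q :: "'n \<Rightarrow> 'n \<Rightarrow> real" and a :: "'n \<Rightarrow> real"
  assumes Hpos: "\<forall>i. H i > 0"
    and Qskew: "\<forall>i j. Q i j + Q j i = 0"
    and Qrow: "\<forall>i. (\<Sum>j\<in>UNIV. Q i j) = 0"
    and apos: "\<forall>i. a i > 0"
    and sol: "is_solution (Flog a) H Q u" and t: "t \<ge> 0"
  shows "S_log H a (u t) = S_log H a (u 0)"
proof (rule const0[OF _ t])
  fix t :: real assume t: "t \<ge> 0"
  define d where "d i = -2 * (\<Sum>j\<in>UNIV. Dmat H Q i j * Flog a i j (u t i) (u t j))" for i
  have pos: "\<And>i. u t i > 0" using sol t unfolding is_solution_def by auto
  have du: "\<And>i. ((\<lambda>s. u s i) has_real_derivative d i) (at t within {0..})"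
    using sol t unfolding is_solution_def d_def by auto
  have di: "((\<lambda>s. H i * (u s i * ln (a i * u s i) - u s i)) has_real_derivative
           H i * (d i * ln (a i * u t i))) (at t within {0..})" for i
  proof -
    have ai: "a i > 0" "u t i > 0" using apos pos by auto
    have aup: "a i * u t i > 0" using ai by simp
    have l: "((\<lambda>s. ln (a i * u s i)) has_real_derivative (inverse (a i * u t i) * (a i * d i))) (at t within {0..})"
      by (rule DERIV_chain2[OF DERIV_ln[OF aup] DERIV_cmult[OF du]])
    have m: "((\<lambda>s. u s i * ln (a i * u s i)) has_real_derivative
        (d i * ln (a i * u t i) + inverse (a i * u t i) * (a i * d i) * u t i)) (at t within {0..})"
      using DERIV_mult[OF du l] by simp
    have "((\<lambda>s. H i * (u s i * ln (a i * u s i) - u s i)) has_real_derivative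
        H i * ((d i * ln (a i * u t i) + inverse (a i * u t i) * (a i * d i) * u t i) - d i)) (at t within {0..})"
      by (intro DERIV_cmult DERIV_diff m du)
    moreover have "(d i * ln (a i * u t i) + inverse (a i * u t i) * (a i * d i) * u t i) - d i = d i * ln (a i * u t i)"
      using ai by (simp add: field_simps)
    ultimately show ?thesis by metis
  qed
  have key: "H i * (d i * ln (a i * u t i))
      = -2 * (\<Sum>j\<in>UNIV. Q i j * (ln (a i * u t i) * Flog a i j (u t i) (u t j)))" for i
  proof -
    have "H i > 0" using Hpos by auto
    then show ?thesis unfolding d_def Dmat_def
      by (simp add: sum_distrib_left sum_distrib_right sum_divide_distrib algebra_simps)
  qed
  have "((\<lambda>s. S_log H a (u s)) has_real_derivative
      (\<Sum>i\<in>UNIV. H i * (d i * ln (a i * u t i)))) (at t within {0..})"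
    unfolding S_log_def by (intro DERIV_sum di)
  moreover have "(\<Sum>i\<in>UNIV. H i * (d i * ln (a i * u t i))) = 0"
    using log_sum[OF Qskew Qrow, of a "u t"] pos apos
    by (simp only: key sum_distrib_left[symmetric]) simp
  ultimately show "((\<lambda>s. S_log H a (u s)) has_real_derivative 0) (at t within {0..})" by simp
qed

theorem mainTheorem2:
  fixes H :: "'n::finite \<Rightarrow> real" and Q :: "'n \<Rightarrow> 'n \<Rightarrow> real" and a :: "'n \<Rightarrow> real"
  assumes N2: "CARD('n) \<ge> 2"
    and Hpos: "\<forall>i. H i > 0"
    and Qskew: "\<forall>i j. Q i j + Q j i = 0"
    and Qrow: "\<forall>i. (\<Sum>j\<in>UNIV. Q i j) = 0"
    and apos: "\<forall>i. a i > 0"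
  shows "(\<forall>u. is_solution (Fgeom a) H Q u \<longrightarrow> (\<forall>t\<ge>0. S_geom H a (u t) = S_geom H a (u 0)))
       \<and> (\<forall>u. is_solution (Flog a) H Q u \<longrightarrow> (\<forall>t\<ge>0. S_log H a (u t) = S_log H a (u 0)))"
  using geom_part[OF Hpos Qskew Qrow apos] log_part[OF Hpos Qskew Qrow apos] by blast

end
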